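(* Let $\mathcal{N}$ be a two-level PT-net system with transitions partitioned into low-level $L$ and high-level $H$. For any high-level net system $\mathcal{N}'$ (with places disjoint from those of $\mathcal{N}$) whose set of transitions $H'$ does not intersect $L$, $\mathcal{N}\setminus H$ is weakly simulated by $(\mathcal{N}|\mathcal{N}')\setminus(H\setminus H')$, which in turn is weakly simulated by $\mathcal{N}$, where all these net systems have the same set of observable transitions $L$.
   Context: A PT-net is $N=(P,T,F)$ with $P,T$ finite disjoint and $F:(P\times T)\cup(T\times P)\to\mathbb{N}$; markings $M:P\to\mathbb{N}$; $t$ enabled at $M$ ($M[t\rangle$) iff $M(p)\ge F(p,t)$ for all $p$, firing gives $M'(p)=M(p)+F(t,p)-F(p,t)$. A PT-net system is $(N,M_0)$. $\mathcal{N}\setminus T'$ deletes the transitions of $T'$ (same places, same initial marking). For systems $\mathcal{N}_1,\mathcal{N}_2$ with disjoint place sets, $\mathcal{N}_1|\mathcal{N}_2$ has the union of places, the union of transitions (a shared transition is a single transition whose arcs to/from places of $\mathcal{N}_i$ are those of $\mathcal{N}_i$), and the union of initial markings. A high-level net system has only high-level transitions. Transitions in $L$ are observable, all others unobservable. A system $\mathcal{A}$ is weakly simulated by $\mathcal{B}$ if there is a relation $R$ between reachable markings of $\mathcal{A}$ and $\mathcal{B}$ containing the pair of initial markings such that for $(M_1,M_1')\in R$: if $M_1[l\rangle M_2$ with $l$ observable, then $M_1'$ reaches by a sequence of unobservable transitions, then $l$, then unobservable transitions, some $M_2'$ with $(M_2,M_2')\in R$; if $M_1[h\rangle M_2$ with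 $h$ unobservable, then $M_1'$ reaches by unobservable transitions some $M_2'$ with $(M_2,M_2')\in R$. *)

theory Defs
  imports Main
begin

text \<open>PT-net systems. Places have type 'p, transitions type 't (so P and T are disjoint).
  The flow function F is split into pre (F(p,t)) and post (F(t,p)).\<close>

record ('p, 't) ptnet =
  places :: "'p set"
  trans  :: "'t set"
  pre    :: "'p \<Rightarrow> 't \<Rightarrow> nat"
  post   :: "'t \<Rightarrow> 'p \<Rightarrow> nat"
  init   :: "'p \<Rightarrow> nat"

type_synonym 'p marking = "'p \<Rightarrow> nat"

definition wf_net :: "('p, 't) ptnet \<Rightarrow> bool" where
  "wf_net N \<longleftrightarrow> finite (places N) \<and> finite (trans N)
     \<and> (\<forall>p t. pre N p t \<noteq> 0 \<longrightarrow> p \<in> places N \<and> t \<in> trans N)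
     \<and> (\<forall>p t. post N t p \<noteq> 0 \<longrightarrow> p \<in> places N \<and> t \<in> trans N)
     \<and> (\<forall>p. init N p \<noteq> 0 \<longrightarrow> p \<in> places N)"

definition enabled :: "('p, 't) ptnet \<Rightarrow> 'p marking \<Rightarrow> 't \<Rightarrow> bool" where
  "enabled N M t \<longleftrightarrow> t \<in> trans N \<and> (\<forall>p. pre N p t \<le> M p)"

definition fire :: "('p, 't) ptnet \<Rightarrow> 'p marking \<Rightarrow> 't \<Rightarrow> 'p marking" where
  "fire N M t = (\<lambda>p. M p + post N t p - pre N p t)"

inductive_set reach :: "('p, 't) ptnet \<Rightarrow> 'p marking set" for N where
  init: "init N \<in> reach N"
| step: "M \<in> reach N \<Longrightarrow> enabled N M t \<Longrightarrow> fire N M t \<in> reach N"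

definition delete :: "('p, 't) ptnet \<Rightarrow> 't set \<Rightarrow> ('p, 't) ptnet" where
  "delete N T' = \<lparr> places = places N, trans = trans N - T',
     pre = (\<lambda>p t. if t \<in> T' then 0 else pre N p t),
     post = (\<lambda>t p. if t \<in> T' then 0 else post N t p),
     init = init N \<rparr>"

text \<open>Composition N1 | N2 (place sets assumed disjoint): shared transitions are merged,
  arcs to/from places of Ni are those of Ni.\<close>
definition compose :: "('p, 't) ptnet \<Rightarrow> ('p, 't) ptnet \<Rightarrow> ('p, 't) ptnet" where
  "compose N1 N2 = \<lparr> places = places N1 \<union> places N2, trans = trans N1 \<union> trans N2,
     pre = (\<lambda>p t. if p \<in> places N1 then pre N1 p t
                   else if p \<in> places N2 then pre N2 p t else 0),
     post = (\<lambda>t p. if p \<in> places N1 then post N1 t p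
                   else if p \<in> places N2 then post N2 t p else 0),
     init = (\<lambda>p. if p \<in> places N1 then init N1 p
                   else if p \<in> places N2 then init N2 p else 0) \<rparr>"

definition tau_steps :: "('p, 't) ptnet \<Rightarrow> 't set \<Rightarrow> 'p marking \<Rightarrow> 'p marking \<Rightarrow> bool" where
  "tau_steps N L = (\<lambda>M M'. \<exists>t. t \<notin> L \<and> enabled N M t \<and> M' = fire N M t)\<^sup>*\<^sup>*"

definition weakly_simulated :: "('p, 't) ptnet \<Rightarrow> ('q, 't) ptnet \<Rightarrow> 't set \<Rightarrow> bool" where
  "weakly_simulated A B L \<longleftrightarrow> (\<exists>R :: 'p marking \<Rightarrow> 'q marking \<Rightarrow> bool.
     R (init A) (init B)
     \<and> (\<forall>M M'. R M M' \<longrightarrow> M \<in> reach A \<and> M' \<in> reach B)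
     \<and> (\<forall>M1 M1' l. R M1 M1' \<longrightarrow> l \<in> L \<longrightarrow> enabled A M1 l \<longrightarrow>
          (\<exists>Ma Mb M2'. tau_steps B L M1' Ma \<and> enabled B Ma l \<and> Mb = fire B Ma l
                        \<and> tau_steps B L Mb M2' \<and> R (fire A M1 l) M2'))
     \<and> (\<forall>M1 M1' h. R M1 M1' \<longrightarrow> h \<notin> L \<longrightarrow> enabled A M1 h \<longrightarrow>
          (\<exists>M2'. tau_steps B L M1' M2' \<and> R (fire A M1 h) M2')))"

end

theory Submission
  imports Defs
begin

lemma tau_reach:
  assumes "tau_steps B L M M'" "M \<in> reach B" shows "M' \<in> reach B"
  using assms(1,2) unfolding tau_steps_def
  by (induction rule: rtranclp_induct) (auto intro: reach.step)

lemma sim_by_fun: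
  fixes A :: "('p,'t) ptnet" and B :: "('q,'t) ptnet"
  assumes i: "g (init A) = init B"
    and obs: "\<And>M t. M \<in> reach A \<Longrightarrow> enabled A M t \<Longrightarrow> t \<in> L \<Longrightarrow>
                enabled B (g M) t \<and> g (fire A M t) = fire B (g M) t"
    and uobs: "\<And>M t. M \<in> reach A \<Longrightarrow> enabled A M t \<Longrightarrow> t \<notin> L \<Longrightarrow>
                tau_steps B L (g M) (g (fire A M t))"
  shows "weakly_simulated A B L"
proof -
  have inv: "g M \<in> reach B" if "M \<in> reach A" for M
    using that
  proof (induction rule: reach.induct)
    case init then show ?case using i by (simp add: reach.init)
  next
    case (step M t)
    show ?case
    proof (cases "t \<in> L")
      case True
      with obs[OF step.hyps] step.IH show ?thesis by (metis reach.step)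
    next
      case False
      with uobs[OF step.hyps] step.IH show ?thesis by (metis tau_reach)
    qed
  qed
  let ?R = "\<lambda>M M'. M \<in> reach A \<and> M' = g M"
  have 1: "?R (init A) (init B)" using i by (simp add: reach.init)
  have 2: "\<forall>M M'. ?R M M' \<longrightarrow> M \<in> reach A \<and> M' \<in> reach B" using inv by auto
  have 3: "\<forall>M1 M1' l. ?R M1 M1' \<longrightarrow> l \<in> L \<longrightarrow> enabled A M1 l \<longrightarrow>
          (\<exists>Ma Mb M2'. tau_steps B L M1' Ma \<and> enabled B Ma l \<and> Mb = fire B Ma l
                        \<and> tau_steps B L Mb M2' \<and> ?R (fire A M1 l) M2')"
    using obs by (auto simp: tau_steps_def intro: reach.step)
  have 4: "\<forall>M1 M1' h. ?R M1 M1' \<longrightarrow> h \<notin> L \<longrightarrow> enabled A M1 h \<longrightarrow>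
          (\<exists>M2'. tau_steps B L M1' M2' \<and> ?R (fire A M1 h) M2')"
    using uobs by (auto intro: reach.step)
  show ?thesis unfolding weakly_simulated_def
    apply (rule exI[where x="?R"])
    using 1 2 3 4 by blast
qed

theorem proposition2:
  fixes N N' :: "('p, 't) ptnet" and L H H' :: "'t set"
  assumes "wf_net N" and "wf_net N'"
    and "trans N = L \<union> H" and "L \<inter> H = {}"
    and "trans N' = H'" and "H' \<inter> L = {}"
    and "places N \<inter> places N' = {}"
  shows "weakly_simulated (delete N H) (delete (compose N N') (H - H')) L
       \<and> weakly_simulated (delete (compose N N') (H - H')) N L"
proof -
  have z: "\<And>p t. p \<notin> places N \<Longrightarrow> pre N p t = 0" "\<And>p t. t \<notin> trans N \<Longrightarrow> pre N p t = 0"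
    "\<And>p t. p \<notin> places N \<Longrightarrow> post N t p = 0" "\<And>p t. t \<notin> trans N \<Longrightarrow> post N t p = 0"
    "\<And>p. p \<notin> places N \<Longrightarrow> init N p = 0"
    "\<And>p t. p \<notin> places N' \<Longrightarrow> pre N' p t = 0" "\<And>p t. t \<notin> trans N' \<Longrightarrow> pre N' p t = 0"
    "\<And>p t. p \<notin> places N' \<Longrightarrow> post N' t p = 0" "\<And>p t. t \<notin> trans N' \<Longrightarrow> post N' t p = 0"
    "\<And>p. p \<notin> places N' \<Longrightarrow> init N' p = 0"
    using assms(1,2) unfolding wf_net_def by blast+
  note w = z
  have dis: "\<And>p. p \<in> places N' \<Longrightarrow> p \<notin> places N" using assms(7) by blast
  have cpre: "\<And>p t. pre (compose N N') p t = (if p \<in> places N' then pre N' p t else pre N p t)"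
    by (auto simp: compose_def z dis)
  have cpost: "\<And>p t. post (compose N N') t p = (if p \<in> places N' then post N' t p else post N t p)"
    by (auto simp: compose_def z dis)
  have cinit: "\<And>p. init (compose N N') p = (if p \<in> places N' then init N' p else init N p)"
    by (auto simp: compose_def z dis)
  have ctrans: "trans (compose N N') = trans N \<union> trans N'" by (simp add: compose_def)
  let ?C = "delete (compose N N') (H - H')"
  have dpre: "\<And>p t. t \<notin> H - H' \<Longrightarrow> pre ?C p t = pre (compose N N') p t"
    and dpost: "\<And>p t. t \<notin> H - H' \<Longrightarrow> post ?C t p = post (compose N N') t p"
    and dinit: "init ?C = init (compose N N')"
    and dtrans: "trans ?C = trans (compose N N') - (H - H')"
    by (auto simp: delete_def)
  have npre: "\<And>p t. pre (delete N H) p t = (if t \<in> H then 0 else pre N p t)"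
    and npost: "\<And>p t. post (delete N H) t p = (if t \<in> H then 0 else post N t p)"
    and ninit: "init (delete N H) = init N"
    and ntrans: "trans (delete N H) = trans N - H"
    by (simp_all add: delete_def)
  have "weakly_simulated (delete N H) (delete (compose N N') (H - H')) L"
  proof (rule sim_by_fun[where g="\<lambda>M p. if p \<in> places N' then init N' p else M p"])
    show "(\<lambda>p. if p \<in> places N' then init N' p else init (delete N H) p) = init (delete (compose N N') (H - H'))"
      by (simp add: dinit cinit ninit fun_eq_iff)
  next
    fix M t assume en: "enabled (delete N H) M t" and tL: "t \<in> L"
    have tH: "t \<notin> H" "t \<notin> H - H'" "t \<notin> trans N'" using tL assms(4,5,6) by auto
    have le: "\<And>p. pre N p t \<le> M p" using en tH by (simp add: enabled_def npre)
    have "t \<in> trans ?C" using en tH by (simp add: enabled_def ntrans dtrans ctrans)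
    then show "enabled (delete (compose N N') (H - H')) (\<lambda>p. if p \<in> places N' then init N' p else M p) t \<and>
         (\<lambda>p. if p \<in> places N' then init N' p else fire (delete N H) M t p) =
         fire (delete (compose N N') (H - H')) (\<lambda>p. if p \<in> places N' then init N' p else M p) t"
      using tH le by (simp add: enabled_def fire_def fun_eq_iff dpre dpost cpre cpost npre npost z)
  next
    fix M t assume "enabled (delete N H) M t" "t \<notin> L"
    then show "tau_steps (delete (compose N N') (H - H')) L (\<lambda>p. if p \<in> places N' then init N' p else M p)
          (\<lambda>p. if p \<in> places N' then init N' p else fire (delete N H) M t p)"
      using assms(3) by (auto simp: enabled_def ntrans)
  qed
  moreover have "weakly_simulated (delete (compose N N') (H - H')) N L"
  proof (rule sim_by_fun[where g="\<lambda>M p. if p \<in> places N' then 0 else M p"])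
    show "(\<lambda>p. if p \<in> places N' then 0 else init (delete (compose N N') (H - H')) p) = init N"
      by (auto simp: dinit cinit fun_eq_iff z dis)
  next
    fix M t assume en: "enabled (delete (compose N N') (H - H')) M t" and tL: "t \<in> L"
    have tH: "t \<notin> H" "t \<notin> H - H'" "t \<notin> trans N'" "t \<in> trans N" using tL assms(3,4,5,6) by auto
    have le: "\<And>p. pre ?C p t \<le> M p" using en by (simp add: enabled_def)
    have le2: "\<And>p. pre N p t \<le> (if p \<in> places N' then 0 else M p)"
    proof -
      fix p show "pre N p t \<le> (if p \<in> places N' then 0 else M p)"
        using le[of p] tH by (auto simp: dpre cpre z dis)
    qed
    show "enabled N (\<lambda>p. if p \<in> places N' then 0 else M p) t \<and>
         (\<lambda>p. if p \<in> places N' then 0 else fire (delete (compose N N') (H - H')) M t p) =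
         fire N (\<lambda>p. if p \<in> places N' then 0 else M p) t"
      using tH le2 by (auto simp: enabled_def fire_def fun_eq_iff dpre dpost cpre cpost z dis)
  next
    fix M t assume en: "enabled (delete (compose N N') (H - H')) M t" and tL: "t \<notin> L"
    have le: "\<And>p. pre ?C p t \<le> M p" using en by (simp add: enabled_def)
    have tC: "t \<in> trans ?C" using en by (simp add: enabled_def)
    show "tau_steps N L (\<lambda>p. if p \<in> places N' then 0 else M p)
          (\<lambda>p. if p \<in> places N' then 0 else fire (delete (compose N N') (H - H')) M t p)"
    proof (cases "t \<in> H")
      case True
      have tH: "t \<notin> H - H'" "t \<in> trans N" using tC True assms(3) by (auto simp: dtrans ctrans)
      have le2: "\<And>p. pre N p t \<le> (if p \<in> places N' then 0 else M p)"
      proof -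
        fix p show "pre N p t \<le> (if p \<in> places N' then 0 else M p)"
          using le[of p] tH by (auto simp: dpre cpre z dis)
      qed
      have "enabled N (\<lambda>p. if p \<in> places N' then 0 else M p) t \<and>
         (\<lambda>p. if p \<in> places N' then 0 else fire (delete (compose N N') (H - H')) M t p) =
         fire N (\<lambda>p. if p \<in> places N' then 0 else M p) t"
        using tH le2 by (auto simp: enabled_def fire_def fun_eq_iff dpre dpost cpre cpost z dis)
      then show ?thesis using tL unfolding tau_steps_def
        by (intro r_into_rtranclp) blast
    next
      case False
      then have tN: "t \<notin> trans N" using assms(3) tL by auto
      have tH: "t \<notin> H - H'" using False by auto
      have "(\<lambda>p. if p \<in> places N' then 0 else fire (delete (compose N N') (H - H')) M t p)
               = (\<lambda>p. if p \<in> places N' then 0 else M p)"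
        using tN tH by (auto simp: fire_def fun_eq_iff dpre dpost cpre cpost z)
      then show ?thesis unfolding tau_steps_def by simp
    qed
  qed
  ultimately show ?thesis ..
qed

end
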